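(* Define $C(2)=1$ and $C(N)=\frac N2\left(2C(N-1)+1\right)$ for $N\ge 3$. Let $N\ge 3$ and let $\Sigma=(\sigma_1,\dots,\sigma_n)$ be a symbolic collision sequence on the vertex set $\{1,\dots,N\}$ which is $C(N)$-rich. Then there exist a label $k\in\{1,\dots,N\}$ and two indices $1\le p<q\le n$ such that: (i) $k\in\sigma_p\cap\sigma_q$; (ii) $k\notin\bigcup_{j=p+1}^{q-1}\sigma_j$; (iii) if $\sigma_p=\sigma_q$, then there exists $j$ with $p<j<q$ and $\sigma_p\cap\sigma_j\neq\emptyset$; (iv) the sequence $\Sigma'$ obtained from $\Sigma$ by deleting all $\sigma_j$ containing $k$ is $\left(2C(N-1)+1\right)$-rich on the vertex set $\{1,\dots,N\}\setminus\{k\}$.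
   Context: A symbolic collision sequence on a finite vertex set $V$ is a finite sequence $\Sigma=(\sigma_1,\dots,\sigma_n)$ of unordered pairs $\sigma_j=\{a,b\}$ of distinct elements of $V$ (listed in time order). For a positive number $C$, $\Sigma$ is called $C$-rich on $V$ if there are at least $C$ pairwise disjoint blocks of consecutive indices $[a_1,b_1],[a_2,b_2],\dots$ with $b_1<a_2$, $b_2<a_3$, etc., such that for each block the graph with vertex set $V$ and edge set $\{\sigma_j: a_i\le j\le b_i\}$ is connected. *)

theory Defs
  imports Main Complex_Main
begin

text \<open>A symbolic collision sequence on V: a list of unordered pairs of distinct
elements of V (list position j-1 holds sigma_j, indices are 1-based in the statement).\<close>
definition collision_seq :: "'a set \<Rightarrow> 'a set list \<Rightarrow> bool" where
  "collision_seq V \<Sigma> \<longleftrightarrow> (\<forall>\<sigma>\<in>set \<Sigma>. \<exists>a b. \<sigma> = {a, b} \<and> a \<noteq> b \<and> a \<in> V \<and> b \<in> V)"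

definition graph_connected :: "'a set \<Rightarrow> 'a set set \<Rightarrow> bool" where
  "graph_connected V E \<longleftrightarrow>
     (\<forall>u\<in>V. \<forall>v\<in>V. (u, v) \<in> {(x, y). x \<in> V \<and> y \<in> V \<and> {x, y} \<in> E}\<^sup>*)"

definition rich :: "real \<Rightarrow> 'a set \<Rightarrow> 'a set list \<Rightarrow> bool" where
  "rich C V \<Sigma> \<longleftrightarrow>
     (\<exists>(m::nat) (a::nat \<Rightarrow> nat) (b::nat \<Rightarrow> nat).
        real m \<ge> C \<and>
        (\<forall>i<m. 1 \<le> a i \<and> a i \<le> b i \<and> b i \<le> length \<Sigma> \<and>
               graph_connected V {\<Sigma> ! (j - 1) | j. a i \<le> j \<and> j \<le> b i}) \<and>
        (\<forall>i. Suc i < m \<longrightarrow> b i < a (Suc i)))"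

fun Cconst :: "nat \<Rightarrow> real" where
  "Cconst n = (if n \<le> 2 then 1 else real n / 2 * (2 * Cconst (n - 1) + 1))"

end

theory Submission imports Defs begin


declare Cconst.simps[simp del]

definition cR :: "'a set \<Rightarrow> 'a set set \<Rightarrow> ('a \<times> 'a) set" where
  "cR V E = {(x, y). x \<in> V \<and> y \<in> V \<and> {x, y} \<in> E}"

lemma gc_alt: "graph_connected V E \<longleftrightarrow> (\<forall>u\<in>V. \<forall>v\<in>V. (u, v) \<in> (cR V E)\<^sup>*)"
  by (simp add: graph_connected_def cR_def)

lemma cR_sym: "sym (cR V E)"
  by (auto simp: sym_def cR_def insert_commute)

lemma gc_edge:
  assumes "graph_connected W F" "x \<in> W" "y \<in> W" "x \<noteq> y"
  shows "\<exists>z. {x, z} \<in> F"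
proof -
  have "(x, y) \<in> (cR W F)\<^sup>*" using assms(1)[unfolded gc_alt] assms(2,3) by blast
  then show ?thesis
    by (rule converse_rtranclE) (use assms in \<open>auto simp: cR_def\<close>)
qed

lemma noncut_one:
  assumes fin: "finite V" and u: "u \<in> V" and two: "\<exists>x\<in>V. x \<noteq> u"
    and con: "graph_connected V E"
  shows "\<exists>v\<in>V. v \<noteq> u \<and> graph_connected (V - {v}) {e\<in>E. v \<notin> e}"
proof -
  let ?R = "cR V E"
  define d where "d x = (LEAST n. (x, u) \<in> ?R ^^ n)" for x
  have reach: "\<exists>n. (x, u) \<in> ?R ^^ n" if "x \<in> V" for x
    using con that u by (auto simp: gc_alt rtrancl_power)
  have dI: "(x, u) \<in> ?R ^^ d x" if "x \<in> V" for x
    unfolding d_def using reach[OF that] by (rule LeastI_ex)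
  have dle: "d x \<le> n" if "(x, u) \<in> ?R ^^ n" for x n
    unfolding d_def using that by (rule Least_le)
  define M where "M = Max (d ` V)"
  have "M \<in> d ` V" unfolding M_def using fin u by (intro Max_in) auto
  then obtain v where v: "v \<in> V" "d v = M" by blast
  have vmax: "d x \<le> d v" if "x \<in> V" for x
    using v fin that unfolding M_def by auto
  obtain x where x: "x \<in> V" "x \<noteq> u" using two by blast
  have "d x \<noteq> 0"
  proof
    assume "d x = 0"
    then have "(x, u) \<in> ?R ^^ 0" using dI[OF x(1)] by simp
    then show False using x by simp
  qed
  then have dv: "d v > 0" using vmax[OF x(1)] by simp
  have "d u = 0" using dle[of u 0] by simp
  then have vu: "v \<noteq> u" using dv by auto
  let ?R' = "cR (V - {v}) {e\<in>E. v \<notin> e}"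
  have key: "\<forall>x. x \<in> V - {v} \<longrightarrow> d x = n \<longrightarrow> (x, u) \<in> ?R'\<^sup>*" for n
  proof (induction n rule: less_induct)
    case (less n)
    show ?case
    proof (intro allI impI)
      fix x assume x: "x \<in> V - {v}" "d x = n"
      show "(x, u) \<in> ?R'\<^sup>*"
      proof (cases n)
        case 0
        then have "(x, u) \<in> ?R ^^ 0" using dI[of x] x by simp
        then show ?thesis by simp
      next
        case (Suc n')
        then have "(x, u) \<in> ?R ^^ Suc n'" using dI[of x] x by simp
        from relpow_Suc_D2[OF this] obtain y where y: "(x, y) \<in> ?R" "(y, u) \<in> ?R ^^ n'"
          by blast
        have dy: "d y \<le> n'" using dle y(2) by blast
        have yV: "y \<in> V" using y(1) by (auto simp: cR_def)
        have yv: "y \<noteq> v"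
        proof
          assume "y = v"
          then have "d v \<le> n'" using dy by simp
          moreover have "d x \<le> d v" using vmax x by auto
          ultimately show False using x Suc by simp
        qed
        have "(x, y) \<in> ?R'" using x y(1) yV yv by (auto simp: cR_def)
        moreover have "(y, u) \<in> ?R'\<^sup>*" using less.IH[of "d y"] dy Suc x yV yv by auto
        ultimately show ?thesis by (rule converse_rtrancl_into_rtrancl)
      qed
    qed
  qed
  have toU: "(x, u) \<in> ?R'\<^sup>*" if "x \<in> V - {v}" for x using key that by blast
  have symR: "?R'\<inverse> = ?R'" using cR_sym sym_conv_converse_eq by blast
  have "graph_connected (V - {v}) {e\<in>E. v \<notin> e}"
    unfolding gc_alt
  proof (intro ballI)
    fix x y assume xy: "x \<in> V - {v}" "y \<in> V - {v}"
    have "(u, y) \<in> (?R'\<inverse>)\<^sup>*" using toU[OF xy(2)] by (simp add: rtrancl_converse)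
    then have "(u, y) \<in> ?R'\<^sup>*" using symR by simp
    then show "(x, y) \<in> ?R'\<^sup>*" using toU[OF xy(1)] by simp
  qed
  then have "v \<noteq> u \<and> graph_connected (V - {v}) {e\<in>E. v \<notin> e}" using vu by simp
  then show ?thesis using v(1) by (rule bexI)
qed

lemma noncut_two:
  assumes fin: "finite V" and c: "card V \<ge> 2" and con: "graph_connected V E"
  shows "2 \<le> card {v\<in>V. graph_connected (V - {v}) {e\<in>E. v \<notin> e}}"
proof -
  have "V \<noteq> {}" using c by auto
  then obtain u where u: "u \<in> V" by blast
  have ex: "\<exists>x\<in>V. x \<noteq> u" if "u \<in> V" for u
  proof (rule ccontr)
    assume "\<not> (\<exists>x\<in>V. x \<noteq> u)"
    then have "V \<subseteq> {u}" by auto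
    then have "card V \<le> card {u}" by (rule card_mono[rotated]) simp
    then show False using c by simp
  qed
  obtain v where v: "v \<in> V" "v \<noteq> u" "graph_connected (V - {v}) {e\<in>E. v \<notin> e}"
    using noncut_one[OF fin u ex[OF u] con] by blast
  obtain w where w: "w \<in> V" "w \<noteq> v" "graph_connected (V - {w}) {e\<in>E. w \<notin> e}"
    using noncut_one[OF fin v(1) ex[OF v(1)] con] by blast
  let ?S = "{v\<in>V. graph_connected (V - {v}) {e\<in>E. v \<notin> e}}"
  have sub: "{v, w} \<subseteq> ?S" using v w by simp
  have "finite ?S" using fin by simp
  then have "card {v, w} \<le> card ?S" using sub by (rule card_mono)
  then show ?thesis using w by simp
qed



lemma set_slice:
  assumes "1 \<le> a" "b \<le> length xs"
  shows "{xs ! (j - 1) | j. a \<le> j \<and> j \<le> b} = set (drop (a - 1) (take b xs))"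
proof
  show "{xs ! (j - 1) | j. a \<le> j \<and> j \<le> b} \<subseteq> set (drop (a - 1) (take b xs))"
  proof
    fix e assume "e \<in> {xs ! (j - 1) | j. a \<le> j \<and> j \<le> b}"
    then obtain j where j: "a \<le> j" "j \<le> b" "e = xs ! (j - 1)" by blast
    have "drop (a - 1) (take b xs) ! (j - a) = xs ! (j - 1)"
      using j assms by (simp add: nth_take)
    moreover have "j - a < length (drop (a - 1) (take b xs))" using j assms by simp
    ultimately show "e \<in> set (drop (a - 1) (take b xs))" using j(3) by (metis nth_mem)
  qed
next
  show "set (drop (a - 1) (take b xs)) \<subseteq> {xs ! (j - 1) | j. a \<le> j \<and> j \<le> b}"
  proof
    fix e assume "e \<in> set (drop (a - 1) (take b xs))"
    then obtain i where i: "i < length (drop (a - 1) (take b xs))" "e = drop (a - 1) (take b xs) ! i"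
      by (metis in_set_conv_nth)
    have "e = xs ! ((a + i) - 1)" using i assms by (simp add: nth_take)
    moreover have "a \<le> a + i" "a + i \<le> b" using i assms by auto
    ultimately show "e \<in> {xs ! (j - 1) | j. a \<le> j \<and> j \<le> b}" by blast
  qed
qed

lemma filt_take_mono:
  assumes "n \<le> n'"
  shows "length (filter P (take n xs)) \<le> length (filter P (take n' xs))"
proof -
  have "take n' xs = take n xs @ drop n (take n' xs)"
    using assms by (metis append_take_drop_id min.absorb1 take_take)
  then show ?thesis by (metis filter_append length_append le_add1)
qed

lemma filt_take_le: "length (filter P (take n xs)) \<le> length (filter P xs)"
  by (metis append_take_drop_id filter_append length_append le_add1)

lemma filt_decomp:
  assumes "1 \<le> a" "a \<le> b"
  shows "filter P (take b xs) = filter P (take (a - 1) xs) @ filter P (drop (a - 1) (take b xs))"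
proof -
  have "take b xs = take (a - 1) xs @ drop (a - 1) (take b xs)"
    using assms by (metis append_take_drop_id diff_le_self min.absorb1 order_trans take_take)
  then show ?thesis by (metis filter_append)
qed

lemma filt_block:
  assumes "1 \<le> a" "a \<le> b" "b \<le> length xs"
  shows "{filter P xs ! (j - 1) | j. Suc (length (filter P (take (a - 1) xs))) \<le> j
            \<and> j \<le> length (filter P (take b xs))}
         = {e \<in> {xs ! (j - 1) | j. a \<le> j \<and> j \<le> b}. P e}"
proof -
  let ?A = "length (filter P (take (a - 1) xs))"
  let ?B = "length (filter P (take b xs))"
  have tk: "take ?B (filter P xs) = filter P (take b xs)"
    by (metis append_eq_conv_conj append_take_drop_id filter_append)
  have "{filter P xs ! (j - 1) | j. Suc ?A \<le> j \<and> j \<le> ?B} = set (drop (Suc ?A - 1) (take ?B (filter P xs)))"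
    by (rule set_slice) (auto simp: filt_take_le)
  also have "\<dots> = set (filter P (drop (a - 1) (take b xs)))"
    using tk filt_decomp[OF assms(1,2), of P xs] by simp
  also have "\<dots> = {e \<in> {xs ! (j - 1) | j. a \<le> j \<and> j \<le> b}. P e}"
    using set_slice[OF assms(1,3)] by auto
  finally show ?thesis .
qed

lemma filt_block_nonempty:
  assumes "1 \<le> a" "a \<le> b" "b \<le> length xs" "\<exists>e\<in>{xs ! (j - 1) | j. a \<le> j \<and> j \<le> b}. P e"
  shows "Suc (length (filter P (take (a - 1) xs))) \<le> length (filter P (take b xs))"
proof -
  have "filter P (drop (a - 1) (take b xs)) \<noteq> []"
    using assms(4) set_slice[OF assms(1,3)] by (auto simp: filter_empty_conv)
  then show ?thesis using filt_decomp[OF assms(1,2), of P xs] by (simp add: Suc_le_eq)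
qed

lemma find_pq:
  fixes \<Sigma> :: "'a set list"
  assumes p0: "1 \<le> p0" "k \<in> \<Sigma> ! (p0 - 1)"
    and q2: "p0 < q2" "q2 \<le> length \<Sigma>" "k \<in> \<Sigma> ! (q2 - 1)"
    and blk: "p0 < a1" "b1 < q2"
    and con: "graph_connected V {\<Sigma> ! (j - 1) | j. a1 \<le> j \<and> j \<le> b1}"
    and kV: "k \<in> V" and w: "w \<in> V" "w \<notin> \<Sigma> ! (p0 - 1)"
  shows "\<exists>p q. 1 \<le> p \<and> p < q \<and> q \<le> length \<Sigma> \<and>
           k \<in> \<Sigma> ! (p - 1) \<inter> \<Sigma> ! (q - 1) \<and>
           (\<forall>j. p < j \<and> j < q \<longrightarrow> k \<notin> \<Sigma> ! (j - 1)) \<and>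
           (\<Sigma> ! (p - 1) = \<Sigma> ! (q - 1) \<longrightarrow>
              (\<exists>j. p < j \<and> j < q \<and> \<Sigma> ! (p - 1) \<inter> \<Sigma> ! (j - 1) \<noteq> {}))"
proof (rule ccontr)
  assume neg: "\<not> ?thesis"
  define e where "e = \<Sigma> ! (p0 - 1)"
  have claim: "q \<le> length \<Sigma> \<Longrightarrow> p0 \<le> q \<Longrightarrow> k \<in> \<Sigma> ! (q - 1) \<Longrightarrow>
      \<Sigma> ! (q - 1) = e \<and> (\<forall>j. p0 \<le> j \<and> j \<le> q \<longrightarrow> \<Sigma> ! (j - 1) \<inter> e \<noteq> {} \<longrightarrow> \<Sigma> ! (j - 1) = e)"
    for q
  proof (induction q rule: less_induct)
    case (less q)
    show ?case
    proof (cases "q = p0")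
      case True
      then show ?thesis using e_def by auto
    next
      case False
      then have qp: "p0 < q" using less.prems by simp
      define K where "K = {i. p0 \<le> i \<and> i < q \<and> k \<in> \<Sigma> ! (i - 1)}"
      have finK: "finite K" unfolding K_def by (rule finite_subset[of _ "{..<q}"]) auto
      have "p0 \<in> K" unfolding K_def using qp p0 by simp
      then have neK: "K \<noteq> {}" by blast
      define p where "p = Max K"
      have pK: "p \<in> K" unfolding p_def using finK neK by (rule Max_in)
      have pmax: "i \<le> p" if "i \<in> K" for i unfolding p_def using finK that by simp
      have pp: "p0 \<le> p" "p < q" "k \<in> \<Sigma> ! (p - 1)" using pK K_def by auto
      have IH: "\<Sigma> ! (p - 1) = e \<and> (\<forall>j. p0 \<le> j \<and> j \<le> p \<longrightarrow> \<Sigma> ! (j - 1) \<inter> e \<noteq> {} \<longrightarrow> \<Sigma> ! (j - 1) = e)"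
        using less.IH[of p] pp less.prems by simp
      have nok: "\<forall>j. p < j \<and> j < q \<longrightarrow> k \<notin> \<Sigma> ! (j - 1)"
      proof (intro allI impI)
        fix j assume j: "p < j \<and> j < q"
        show "k \<notin> \<Sigma> ! (j - 1)"
        proof
          assume "k \<in> \<Sigma> ! (j - 1)"
          then have "j \<in> K" unfolding K_def using j pp by simp
          then show False using pmax j by fastforce
        qed
      qed
      have "1 \<le> p" using pp p0 by simp
      then have fail: "\<Sigma> ! (p - 1) = \<Sigma> ! (q - 1) \<and>
              \<not> (\<exists>j. p < j \<and> j < q \<and> \<Sigma> ! (p - 1) \<inter> \<Sigma> ! (j - 1) \<noteq> {})"
        using neg pp nok less.prems by blast
      show ?thesis
      proof
        show "\<Sigma> ! (q - 1) = e" using fail IH by simp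
        show "\<forall>j. p0 \<le> j \<and> j \<le> q \<longrightarrow> \<Sigma> ! (j - 1) \<inter> e \<noteq> {} \<longrightarrow> \<Sigma> ! (j - 1) = e"
        proof (intro allI impI)
          fix j assume j: "p0 \<le> j \<and> j \<le> q" and ne: "\<Sigma> ! (j - 1) \<inter> e \<noteq> {}"
          consider "j \<le> p" | "p < j \<and> j < q" | "j = q" using j by linarith
          then show "\<Sigma> ! (j - 1) = e"
          proof cases
            case 1 then show ?thesis using IH j ne by blast
          next
            case 2 then show ?thesis using fail IH ne by (metis Int_commute)
          next
            case 3 then show ?thesis using fail IH by simp
          qed
        qed
      qed
    qed
  qed
  have C: "\<Sigma> ! (j - 1) = e" if "p0 \<le> j" "j \<le> q2" "\<Sigma> ! (j - 1) \<inter> e \<noteq> {}" for j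
  proof -
    have "p0 \<le> q2" using q2(1) by simp
    note Cl = claim[OF q2(2) this q2(3)]
    then show ?thesis using that by blast
  qed
  let ?R = "cR V {\<Sigma> ! (j - 1) | j. a1 \<le> j \<and> j \<le> b1}"
  have "(k, w) \<in> ?R\<^sup>*" using con[unfolded gc_alt] kV w(1) by blast
  then have "w \<in> e"
  proof (induction rule: rtrancl_induct)
    case base
    then show ?case using p0 e_def by simp
  next
    case (step y z)
    have "{y, z} \<in> {\<Sigma> ! (j - 1) | j. a1 \<le> j \<and> j \<le> b1}" using step.hyps(2) by (simp add: cR_def)
    then obtain j where j: "a1 \<le> j" "j \<le> b1" "{y, z} = \<Sigma> ! (j - 1)" by blast
    have ne: "\<Sigma> ! (j - 1) \<inter> e \<noteq> {}" using j(3) step.IH by blast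
    have "p0 \<le> j" "j \<le> q2" using j blk by linarith+
    then have "\<Sigma> ! (j - 1) = e" using C ne by blast
    then show ?case using j(3) by blast
  qed
  then show False using w e_def by simp
qed



lemma Cconst_ge1: "Cconst n \<ge> 1"
proof (induction n rule: less_induct)
  case (less n)
  show ?case
  proof (cases "n \<le> 2")
    case True then show ?thesis by (subst Cconst.simps) simp
  next
    case False
    then have "Cconst (n - 1) \<ge> 1" using less.IH[of "n - 1"] by simp
    moreover have "real n / 2 \<ge> 1" using False by simp
    ultimately have "real n / 2 * (2 * Cconst (n - 1) + 1) \<ge> 1 * 1"
      by (intro mult_mono) auto
    then show ?thesis using False by (subst Cconst.simps) simp
  qed
qed

lemma Cconst_rec: "n \<ge> 3 \<Longrightarrow> Cconst n = real n / 2 * (2 * Cconst (n - 1) + 1)"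
  by (subst Cconst.simps) simp

lemma two_elems:
  assumes "finite A" "card A \<ge> 2"
  shows "\<exists>x\<in>A. \<exists>y\<in>A. x \<noteq> y"
proof -
  have "\<not> card A \<le> Suc 0" using assms(2) by simp
  then show ?thesis using card_le_Suc0_iff_eq[OF assms(1)] by blast
qed

lemma chain_lt:
  assumes "\<forall>i<m. a i \<le> (b i :: nat)" "\<forall>i. Suc i < m \<longrightarrow> b i < a (Suc i)"
  shows "i < i' \<Longrightarrow> i' < m \<Longrightarrow> b i < a i'"
proof (induction i')
  case 0 then show ?case by simp
next
  case (Suc i')
  show ?case
  proof (cases "i = i'")
    case True then show ?thesis using assms Suc by simp
  next
    case False
    then have "b i < a i'" using Suc by simp
    moreover have "a i' \<le> b i'" using assms Suc by simp
    moreover have "b i' < a (Suc i')" using assms Suc by simp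
    ultimately show ?thesis by simp
  qed
qed

theorem lemma3p1:
  fixes N :: nat and \<Sigma> :: "nat set list"
  assumes "N \<ge> 3"
    and "collision_seq {1..N} \<Sigma>"
    and "rich (Cconst N) {1..N} \<Sigma>"
  shows "\<exists>k\<in>{1..N}. \<exists>p q. 1 \<le> p \<and> p < q \<and> q \<le> length \<Sigma> \<and>
           k \<in> \<Sigma> ! (p - 1) \<inter> \<Sigma> ! (q - 1) \<and>
           (\<forall>j. p < j \<and> j < q \<longrightarrow> k \<notin> \<Sigma> ! (j - 1)) \<and>
           (\<Sigma> ! (p - 1) = \<Sigma> ! (q - 1) \<longrightarrow>
              (\<exists>j. p < j \<and> j < q \<and> \<Sigma> ! (p - 1) \<inter> \<Sigma> ! (j - 1) \<noteq> {})) \<and>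
           rich (2 * Cconst (N - 1) + 1) ({1..N} - {k}) (filter (\<lambda>\<sigma>. k \<notin> \<sigma>) \<Sigma>)"
proof -
  define V where "V = {1..N}"
  have finV: "finite V" and cardV: "card V = N" unfolding V_def by auto
  obtain m a b where mab: "real m \<ge> Cconst N"
    "\<forall>i<m. 1 \<le> a i \<and> a i \<le> b i \<and> b i \<le> length \<Sigma> \<and>
               graph_connected V {\<Sigma> ! (j - 1) | j. a i \<le> j \<and> j \<le> b i}"
    "\<forall>i. Suc i < m \<longrightarrow> b i < a (Suc i)"
    using assms(3) unfolding rich_def V_def by blast
  define E where "E i = {\<Sigma> ! (j - 1) | j. a i \<le> j \<and> j \<le> b i}" for i
  define NC where "NC i = {v\<in>V. graph_connected (V - {v}) {e\<in>E i. v \<notin> e}}" for i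
  have NC2: "2 \<le> card (NC i)" if "i < m" for i
    unfolding NC_def using noncut_two[OF finV _, of "E i"] cardV assms(1) mab(2) that E_def by auto
  define C' where "C' = Cconst (N - 1)"
  have CN: "Cconst N = real N / 2 * (2 * C' + 1)" using Cconst_rec[OF assms(1)] C'_def by simp
  define cnt where "cnt v = card {i\<in>{..<m}. v \<in> NC i}" for v
  have dc: "(\<Sum>v\<in>V. cnt v) = (\<Sum>i<m. card (NC i))"
  proof -
    have "(\<Sum>v\<in>V. cnt v) = (\<Sum>v\<in>V. \<Sum>i<m. if v \<in> NC i then 1 else 0)"
      unfolding cnt_def by (simp add: sum.If_cases Int_def)
    also have "\<dots> = (\<Sum>i<m. \<Sum>v\<in>V. if v \<in> NC i then 1 else 0)" by (rule sum.swap)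
    also have "\<dots> = (\<Sum>i<m. card (NC i))"
    proof (rule sum.cong)
      fix i
      have "NC i \<subseteq> V" unfolding NC_def by auto
      then have "V \<inter> NC i = NC i" by auto
      then show "(\<Sum>v\<in>V. if v \<in> NC i then 1 else 0) = card (NC i)"
        using finV by (simp add: sum.If_cases)
    qed simp
    finally show ?thesis .
  qed
  have "(\<Sum>i<m. card (NC i)) \<ge> (\<Sum>i<m. 2)" by (rule sum_mono) (simp add: NC2)
  then have sumge: "(\<Sum>v\<in>V. cnt v) \<ge> 2 * m" using dc by simp
  have "\<exists>k\<in>V. real (cnt k) \<ge> 2 * C' + 1"
  proof (rule ccontr)
    assume "\<not> ?thesis"
    then have lt: "\<And>v. v \<in> V \<Longrightarrow> real (cnt v) < 2 * C' + 1" by force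
    have "V \<noteq> {}" using cardV assms(1) by auto
    then have "(\<Sum>v\<in>V. real (cnt v)) < (\<Sum>v\<in>V. 2 * C' + 1)"
      using finV lt by (intro sum_strict_mono) auto
    also have "\<dots> = real N * (2 * C' + 1)" using cardV by simp
    also have "\<dots> = 2 * Cconst N" using CN by simp
    also have "\<dots> \<le> 2 * real m" using mab(1) by simp
    finally have "real (\<Sum>v\<in>V. cnt v) < real (2 * m)" by simp
    then show False using sumge by linarith
  qed
  then obtain k where kV: "k \<in> V" and kcnt: "real (cnt k) \<ge> 2 * C' + 1" by blast
  have chain: "b i < a i'" if "i < i'" "i' < m" for i i'
    using chain_lt[of m a b i i'] mab that by auto
  define P where "P = (\<lambda>\<sigma>::nat set. k \<notin> \<sigma>)"
  define S where "S = {i\<in>{..<m}. k \<in> NC i}"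
  define L where "L = sorted_list_of_set S"
  have finS: "finite S" unfolding S_def by simp
  have lenL: "length L = cnt k" unfolding L_def S_def cnt_def by simp
  have setL: "set L = S" unfolding L_def using finS by simp
  have sortL: "sorted_wrt (<) L" unfolding L_def by simp
  define a' where "a' t = Suc (length (filter P (take (a (L ! t) - 1) \<Sigma>)))" for t
  define b' where "b' t = length (filter P (take (b (L ! t)) \<Sigma>))" for t
  have rich': "rich (2 * C' + 1) (V - {k}) (filter P \<Sigma>)"
    unfolding rich_def
  proof (intro exI conjI allI impI)
    show "real (cnt k) \<ge> 2 * C' + 1" by (rule kcnt)
  next
    fix t assume t: "t < cnt k"
    then have LtS: "L ! t \<in> S" using lenL setL nth_mem by metis
    then have Lm: "L ! t < m" and kNC: "k \<in> NC (L ! t)" unfolding S_def by auto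
    have ab: "1 \<le> a (L ! t)" "a (L ! t) \<le> b (L ! t)" "b (L ! t) \<le> length \<Sigma>" using mab(2) Lm by auto
    have gc: "graph_connected (V - {k}) {e\<in>E (L ! t). P e}" using kNC unfolding NC_def P_def by simp
    have eq: "{filter P \<Sigma> ! (j - 1) | j. a' t \<le> j \<and> j \<le> b' t} = {e\<in>E (L ! t). P e}"
      unfolding a'_def b'_def E_def by (rule filt_block[OF ab])
    obtain x y where xy: "x \<in> V - {k}" "y \<in> V - {k}" "x \<noteq> y"
    proof -
      have "card (V - {k}) \<ge> 2" using cardV kV assms(1) finV by simp
      then obtain x y where "x \<in> V - {k}" "y \<in> V - {k}" "x \<noteq> y"
        using two_elems[of "V - {k}"] finV by blast
      then show ?thesis using that by blast
    qed
    obtain z where "{x, z} \<in> {e\<in>E (L ! t). P e}" using gc_edge[OF gc xy] by blast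
    then have "\<exists>e\<in>E (L ! t). P e" by blast
    then have "a' t \<le> b' t" unfolding a'_def b'_def E_def by (rule filt_block_nonempty[OF ab])
    then show "1 \<le> a' t" "a' t \<le> b' t" using a'_def by auto
    show "b' t \<le> length (filter P \<Sigma>)" unfolding b'_def by (rule filt_take_le)
    show "graph_connected (V - {k}) {filter P \<Sigma> ! (j - 1) | j. a' t \<le> j \<and> j \<le> b' t}"
      using eq gc by simp
  next
    fix t assume t: "Suc t < cnt k"
    have "L ! t < L ! Suc t" using sortL t lenL sorted_wrt_nth_less by fastforce
    moreover have "L ! Suc t \<in> S" using t lenL setL nth_mem by metis
    ultimately have "b (L ! t) < a (L ! Suc t)" using chain S_def by auto
    then have "b (L ! t) \<le> a (L ! Suc t) - 1" by simp
    then have "length (filter P (take (b (L ! t)) \<Sigma>)) \<le> length (filter P (take (a (L ! Suc t) - 1) \<Sigma>))"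
      by (rule filt_take_mono)
    then show "b' t < a' (Suc t)" unfolding a'_def b'_def by simp
  qed
  have m3: "m \<ge> 3"
  proof -
    have "C' \<ge> 1" unfolding C'_def by (rule Cconst_ge1)
    then have "real N / 2 * (2 * C' + 1) \<ge> 3 / 2 * 3"
      using assms(1) by (intro mult_mono) auto
    then show ?thesis using CN mab(1) by linarith
  qed
  have occ: "\<exists>j. a i \<le> j \<and> j \<le> b i \<and> k \<in> \<Sigma> ! (j - 1)" if "i < m" for i
  proof -
    obtain y where y: "y \<in> V" "y \<noteq> k"
    proof -
      have "card (V - {k}) \<ge> 1" using cardV kV assms(1) finV by simp
      then have "V - {k} \<noteq> {}" by (metis card.empty not_one_le_zero)
      then obtain y where "y \<in> V - {k}" by blast
      then show ?thesis using that by blast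
    qed
    have "graph_connected V (E i)" using mab(2) that E_def by simp
    then obtain z where "{k, z} \<in> E i" using gc_edge kV y by metis
    then obtain j where "a i \<le> j" "j \<le> b i" "{k, z} = \<Sigma> ! (j - 1)" unfolding E_def by blast
    then show ?thesis by (metis insertI1)
  qed
  obtain p0 where p0: "a 0 \<le> p0" "p0 \<le> b 0" "k \<in> \<Sigma> ! (p0 - 1)" using occ[of 0] m3 by auto
  obtain q2 where q2: "a 2 \<le> q2" "q2 \<le> b 2" "k \<in> \<Sigma> ! (q2 - 1)" using occ[of 2] m3 by auto
  have b01: "b 0 < a 1" "b 1 < a 2" using chain m3 by auto
  have ab0: "1 \<le> a 0" "a 1 \<le> b 1" "b 2 \<le> length \<Sigma>" using mab(2) m3 by auto
  have p0len: "p0 - 1 < length \<Sigma>" using p0 b01 ab0 q2 by linarith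
  obtain w where w: "w \<in> V" "w \<notin> \<Sigma> ! (p0 - 1)"
  proof -
    have "\<Sigma> ! (p0 - 1) \<in> set \<Sigma>" using p0len by simp
    then obtain x y where xy: "\<Sigma> ! (p0 - 1) = {x, y}"
      using assms(2) unfolding collision_seq_def by blast
    have "card {x, y} \<le> 2" by (simp add: card_insert_le_m1)
    moreover have "card V - card {x, y} \<le> card (V - {x, y})"
      by (rule diff_card_le_card_Diff) simp
    ultimately have "card (V - {x, y}) \<ge> 1" using cardV assms(1) by linarith
    then have "V - {x, y} \<noteq> {}" by (metis card.empty not_one_le_zero)
    then obtain w where "w \<in> V - {x, y}" by blast
    then show ?thesis using that xy by blast
  qed
  have pq: "\<exists>p q. 1 \<le> p \<and> p < q \<and> q \<le> length \<Sigma> \<and>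
           k \<in> \<Sigma> ! (p - 1) \<inter> \<Sigma> ! (q - 1) \<and>
           (\<forall>j. p < j \<and> j < q \<longrightarrow> k \<notin> \<Sigma> ! (j - 1)) \<and>
           (\<Sigma> ! (p - 1) = \<Sigma> ! (q - 1) \<longrightarrow>
              (\<exists>j. p < j \<and> j < q \<and> \<Sigma> ! (p - 1) \<inter> \<Sigma> ! (j - 1) \<noteq> {}))"
  proof -
    have f1: "1 \<le> p0" using ab0 p0 by linarith
    have f2: "p0 < q2" "p0 < a 1" "b 1 < q2" using p0 q2 b01 ab0 by linarith+
    have f3: "q2 \<le> length \<Sigma>" using q2 ab0 by linarith
    have f4: "graph_connected V {\<Sigma> ! (j - 1) | j. a 1 \<le> j \<and> j \<le> b 1}" using mab(2) m3 by simp
    show ?thesis by (rule find_pq[OF f1 p0(3) f2(1) f3 q2(3) f2(2) f2(3) f4 kV w])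
  qed
  show ?thesis using pq rich' kV unfolding V_def P_def C'_def by blast
qed


end
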